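(* Let $X$ be an $n$-dimensional polyhedral normed space. Suppose that $Y \subseteq X$ is a $k$-dimensional subspace, $1 \leq k \leq n-1$, which is in general position and satisfies $\lambda(Y, X)=1$. Then there is a unique projection $P: X \to Y$ with $\|P\|=1$.
   Context: A normed space $X=(\mathbb{R}^n,\|\cdot\|)$ is polyhedral if its unit ball $B_X$ is a convex polytope; write $\mathrm{ext}\, B_X=\{x_1,\dots,x_N\}$ and $\mathrm{ext}\, B_{X^*}=\{f_1,\dots,f_M\}$ for the extreme points of the unit balls of $X$ and $X^*$. Two linear subspaces $Y,Z\subseteq\mathbb{R}^n$ are in general position if $\dim \mathrm{lin}(Y\cup Z)=\min(\dim Y+\dim Z,n)$. A subspace $Y$ is in general position if it is in general position with every subspace $\mathrm{lin}\{x_i : i\in I\}$, $I\subseteq\{1,\dots,N\}$, and every subspace $\bigcap_{i\in I}\ker f_i$, $I\subseteq\{1,\dots,M\}$. A projection onto $Y$ is a linear $P:X\to Y$ with $P|_Y=\mathrm{id}_Y$, and $\lambda(Y,X)$ is the infimum of the operator norms of such projections. *)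

theory Defs
  imports "HOL-Analysis.Analysis"
begin

definition is_norm :: "('a::real_vector \<Rightarrow> real) \<Rightarrow> bool" where
  "is_norm N \<longleftrightarrow> (\<forall>x. N x = 0 \<longleftrightarrow> x = 0) \<and> (\<forall>c x. N (c *\<^sub>R x) = \<bar>c\<bar> * N x)
     \<and> (\<forall>x y. N (x + y) \<le> N x + N y)"

definition unit_ball :: "('a::real_vector \<Rightarrow> real) \<Rightarrow> 'a set" where
  "unit_ball N = {x. N x \<le> 1}"

text \<open>Unit ball of the dual space; a linear functional on real^n is identified
  with the vector f via x \<mapsto> f \<bullet> x.\<close>
definition dual_unit_ball :: "('a::real_inner \<Rightarrow> real) \<Rightarrow> 'a set" where
  "dual_unit_ball N = {f. \<forall>x. N x \<le> 1 \<longrightarrow> f \<bullet> x \<le> 1}"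

definition polyhedral_norm :: "('a::real_vector \<Rightarrow> real) \<Rightarrow> bool" where
  "polyhedral_norm N \<longleftrightarrow> is_norm N \<and> polytope (unit_ball N)"

definition ext_ball :: "('a::real_vector \<Rightarrow> real) \<Rightarrow> 'a set" where
  "ext_ball N = {x. x extreme_point_of (unit_ball N)}"

definition ext_dual_ball :: "('a::real_inner \<Rightarrow> real) \<Rightarrow> 'a set" where
  "ext_dual_ball N = {f. f extreme_point_of (dual_unit_ball N)}"

definition in_gen_pos :: "'a::euclidean_space set \<Rightarrow> 'a set \<Rightarrow> bool" where
  "in_gen_pos Y Z \<longleftrightarrow> dim (span (Y \<union> Z)) = min (dim Y + dim Z) DIM('a)"

definition subspace_gen_pos :: "('a::euclidean_space \<Rightarrow> real) \<Rightarrow> 'a set \<Rightarrow> bool" where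
  "subspace_gen_pos N Y \<longleftrightarrow>
     (\<forall>S \<subseteq> ext_ball N. in_gen_pos Y (span S)) \<and>
     (\<forall>F \<subseteq> ext_dual_ball N. in_gen_pos Y {x. \<forall>f\<in>F. f \<bullet> x = 0})"

definition is_projection :: "'a::real_vector set \<Rightarrow> ('a \<Rightarrow> 'a) \<Rightarrow> bool" where
  "is_projection Y P \<longleftrightarrow> linear P \<and> (\<forall>x. P x \<in> Y) \<and> (\<forall>y\<in>Y. P y = y)"

definition op_norm :: "('a::real_vector \<Rightarrow> real) \<Rightarrow> ('a \<Rightarrow> 'a) \<Rightarrow> real" where
  "op_norm N P = Sup {N (P x) | x. N x \<le> 1}"

definition proj_const :: "('a::real_vector \<Rightarrow> real) \<Rightarrow> 'a set \<Rightarrow> real" where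
  "proj_const N Y = Inf {op_norm N P | P. is_projection Y P}"

end

theory Submission
  imports Defs
begin


lemma nrm_scale: "is_norm N \<Longrightarrow> N (c *\<^sub>R x) = \<bar>c\<bar> * N x"
  by (simp add: is_norm_def)
lemma nrm_tri: "is_norm N \<Longrightarrow> N (x + y) \<le> N x + N y"
  by (simp add: is_norm_def)
lemma nrm_eq0: "is_norm N \<Longrightarrow> N x = 0 \<longleftrightarrow> x = 0"
  by (simp add: is_norm_def)
lemma nrm0: "is_norm N \<Longrightarrow> N 0 = 0"
  by (simp add: is_norm_def)
lemma nrm_neg: "is_norm N \<Longrightarrow> N (- x) = N x"
  using nrm_scale[of N "-1" x] by simp
lemma nrm_nonneg: "is_norm N \<Longrightarrow> 0 \<le> N x"
  using nrm_tri[of N x "-x"] nrm_neg[of N x] nrm0[of N] by simp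
lemma nrm_pos: "is_norm N \<Longrightarrow> x \<noteq> 0 \<Longrightarrow> 0 < N x"
  using nrm_nonneg[of N x] nrm_eq0[of N x] by linarith
lemma nrm_diff: "is_norm N \<Longrightarrow> N x - N y \<le> N (x - y)"
  using nrm_tri[of N "x - y" y] by simp
lemma nrm_diff2: "is_norm N \<Longrightarrow> N x - N y \<le> N (x + y)"
  using nrm_tri[of N "x + y" "-y"] nrm_neg[of N y] by simp

lemma nrm_sum: assumes "is_norm N" shows "N (sum f A) \<le> (\<Sum>i\<in>A. N (f i))"
proof (cases "finite A")
  case True then show ?thesis
  proof (induction A rule: finite_induct)
    case empty then show ?case using nrm0[OF assms] by simp
  next
    case (insert a A)
    then show ?case using nrm_tri[OF assms, of "f a" "sum f A"] by simp
  qed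
next
  case False then show ?thesis using nrm0[OF assms] by simp
qed

lemma nrm_upper:
  fixes N :: "real^'n \<Rightarrow> real"
  assumes "is_norm N" shows "\<exists>C>0. \<forall>x. N x \<le> C * norm x"
proof -
  define C where "C = 1 + (\<Sum>i\<in>UNIV. N (axis i 1))"
  have C0: "C > 0" unfolding C_def using nrm_nonneg[OF assms] by (simp add: sum_nonneg add_pos_nonneg)
  have "N x \<le> C * norm x" for x
  proof -
    have "N x = N (\<Sum>i\<in>UNIV. (x$i) *\<^sub>R axis i 1)"
      using basis_expansion[of x] by (simp add: scalar_mult_eq_scaleR)
    also have "\<dots> \<le> (\<Sum>i\<in>UNIV. N ((x$i) *\<^sub>R axis i (1::real)))" by (rule nrm_sum[OF assms])
    also have "\<dots> = (\<Sum>i\<in>UNIV. \<bar>x$i\<bar> * N (axis i (1::real)))" using nrm_scale[OF assms] by simp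
    also have "\<dots> \<le> (\<Sum>i\<in>UNIV. norm x * N (axis i (1::real)))"
      by (rule sum_mono, rule mult_right_mono, rule component_le_norm_cart, rule nrm_nonneg[OF assms])
    also have "\<dots> = norm x * (\<Sum>i\<in>UNIV. N (axis i (1::real)))" by (simp add: sum_distrib_left)
    also have "\<dots> \<le> C * norm x" unfolding C_def by (simp add: algebra_simps)
    finally show ?thesis .
  qed
  then show ?thesis using C0 by blast
qed

lemma nrm_lower:
  fixes N :: "real^'n \<Rightarrow> real"
  assumes "polyhedral_norm N" shows "\<exists>R>0. \<forall>x. norm x \<le> R * N x"
proof -
  have n: "is_norm N" and p: "polytope (unit_ball N)" using assms by (auto simp: polyhedral_norm_def)
  have "bounded (unit_ball N)" using polytope_imp_compact[OF p] compact_imp_bounded by blast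
  then obtain R where R: "R > 0" "\<And>x. x \<in> unit_ball N \<Longrightarrow> norm x \<le> R" by (auto simp: bounded_pos)
  have "norm x \<le> R * N x" for x
  proof (cases "x = 0")
    case True then show ?thesis using nrm0[OF n] by simp
  next
    case False
    then have Np: "N x > 0" using nrm_pos[OF n] by blast
    have "N ((1 / N x) *\<^sub>R x) = 1" using Np nrm_scale[OF n] by simp
    then have "norm ((1 / N x) *\<^sub>R x) \<le> R" using R(2) unfolding unit_ball_def by (metis mem_Collect_eq order_refl)
    then have "norm x / N x \<le> R" using Np by (simp add: divide_inverse mult.commute)
    then show ?thesis using Np by (simp add: divide_le_eq mult.commute)
  qed
  then show ?thesis using R by blast
qed

lemma dual_le:
  assumes "is_norm N" "f \<in> dual_unit_ball N" shows "f \<bullet> x \<le> N x"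
proof (cases "x = 0")
  case True then show ?thesis using nrm0[OF assms(1)] by simp
next
  case False
  then have Np: "N x > 0" using nrm_pos[OF assms(1)] by blast
  have "N ((1 / N x) *\<^sub>R x) = 1" using Np nrm_scale[OF assms(1)] by simp
  then have "f \<bullet> ((1 / N x) *\<^sub>R x) \<le> 1" using assms(2) unfolding dual_unit_ball_def by (metis mem_Collect_eq order_refl)
  then have "f \<bullet> x / N x \<le> 1" by (simp add: divide_inverse mult.commute)
  then show ?thesis using Np by (simp add: divide_le_eq mult.commute)
qed



lemma op_norm_bdd:
  fixes N :: "real^'n \<Rightarrow> real"
  assumes "polyhedral_norm N" "linear P"
  shows "bdd_above {N (P x) | x. N x \<le> 1}"
proof -
  have n: "is_norm N" using assms by (simp add: polyhedral_norm_def)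
  obtain C where C: "C > 0" "\<And>x. N x \<le> C * norm x" using nrm_upper[OF n] by blast
  obtain R where R: "R > 0" "\<And>x. norm x \<le> R * N x" using nrm_lower[OF assms(1)] by blast
  obtain B where B: "B > 0" "\<And>x. norm (P x) \<le> B * norm x" using linear_bounded_pos[OF assms(2)] by blast
  have "N (P x) \<le> C * B * R" if "N x \<le> 1" for x
  proof -
    have "N (P x) \<le> C * norm (P x)" by (rule C(2))
    also have "\<dots> \<le> C * (B * norm x)" using B(2) C(1) by (simp add: mult_left_mono)
    also have "\<dots> \<le> C * (B * (R * N x))" using R(2)[of x] B(1) C(1) by (simp add: mult_left_mono)
    also have "\<dots> \<le> C * (B * R)" using that B(1) C(1) R(1) nrm_nonneg[OF n, of x] by (simp add: mult_left_mono)
    finally show ?thesis by simp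
  qed
  then show ?thesis by (auto simp: bdd_above_def)
qed

lemma op_norm_le_iff:
  fixes N :: "real^'n \<Rightarrow> real"
  assumes "polyhedral_norm N" "linear P"
  shows "op_norm N P \<le> c \<longleftrightarrow> (\<forall>x. N x \<le> 1 \<longrightarrow> N (P x) \<le> c)"
proof -
  have n: "is_norm N" using assms by (simp add: polyhedral_norm_def)
  have "N (P 0) \<in> {N (P x) | x. N x \<le> 1}" using nrm0[OF n] by auto
  then have ne: "{N (P x) | x. N x \<le> 1} \<noteq> {}" by blast
  show ?thesis unfolding op_norm_def using cSup_le_iff[OF ne op_norm_bdd[OF assms]] by blast
qed

lemma op_norm_upper:
  fixes N :: "real^'n \<Rightarrow> real"
  assumes "polyhedral_norm N" "linear P" "N x \<le> 1"
  shows "N (P x) \<le> op_norm N P"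
  unfolding op_norm_def using assms(3) by (intro cSup_upper[OF _ op_norm_bdd[OF assms(1,2)]]) blast

lemma proj_op_norm_ge:
  fixes N :: "real^'n \<Rightarrow> real"
  assumes "polyhedral_norm N" "is_projection Y P" "y \<in> Y" "y \<noteq> 0"
  shows "1 \<le> op_norm N P"
proof -
  have n: "is_norm N" using assms by (simp add: polyhedral_norm_def)
  have lin: "linear P" using assms(2) by (simp add: is_projection_def)
  have Np: "N y > 0" using nrm_pos[OF n assms(4)] .
  define v where "v = (1 / N y) *\<^sub>R y"
  have Nv: "N v = 1" unfolding v_def using Np nrm_scale[OF n] by simp
  have "P v = v" unfolding v_def using assms(2,3) lin by (simp add: is_projection_def linear_scale)
  then show ?thesis using op_norm_upper[OF assms(1) lin, of v] Nv by simp
qed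

lemma supporting_fun:
  fixes N :: "real^'n \<Rightarrow> real"
  assumes "polyhedral_norm N" "N y = 1"
  shows "\<exists>f\<in>dual_unit_ball N. f \<bullet> y = 1"
proof -
  have n: "is_norm N" and p: "polytope (unit_ball N)" using assms by (auto simp: polyhedral_norm_def)
  let ?B = "unit_ball N"
  have cv: "convex ?B" using polytope_imp_convex[OF p] .
  have cl: "closed ?B" using polytope_imp_closed[OF p] .
  obtain C where C: "C > 0" "\<And>x. N x \<le> C * norm x" using nrm_upper[OF n] by blast
  have "ball 0 (1 / C) \<subseteq> ?B"
  proof
    fix x assume "x \<in> ball (0::real^'n) (1 / C)"
    then have "norm x < 1 / C" by simp
    then have "C * norm x < 1" using C(1) by (simp add: field_simps)
    then show "x \<in> ?B" using C(2)[of x] by (simp add: unit_ball_def)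
  qed
  then have i0: "0 \<in> interior ?B" using C(1) by (meson centre_in_ball interior_maximal open_ball subsetD divide_pos_pos zero_less_one)
  then have ri: "rel_interior ?B = interior ?B" using rel_interior_nonempty_interior by blast
  have yni: "y \<notin> interior ?B"
  proof
    assume "y \<in> interior ?B"
    then obtain e where e: "e > 0" "ball y e \<subseteq> ?B" by (meson mem_interior)
    have y0: "y \<noteq> 0" using assms(2) nrm0[OF n] by auto
    define d where "d = e / (2 * norm y)"
    have d0: "d > 0" unfolding d_def using e y0 by simp
    have "dist y ((1 + d) *\<^sub>R y) = d * norm y" using d0 by (simp add: dist_norm algebra_simps)
    also have "\<dots> < e" unfolding d_def using e y0 by simp
    finally have "(1 + d) *\<^sub>R y \<in> ?B" using e by auto
    then have "(1 + d) * N y \<le> 1" using nrm_scale[OF n] d0 by (simp add: unit_ball_def)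
    then show False using assms(2) d0 by simp
  qed
  have yB: "y \<in> closure ?B" using cl assms(2) by (simp add: unit_ball_def)
  obtain a where a: "a \<noteq> 0" "\<And>z. z \<in> closure ?B \<Longrightarrow> a \<bullet> y \<le> a \<bullet> z"
      "\<And>z. z \<in> rel_interior ?B \<Longrightarrow> a \<bullet> y < a \<bullet> z"
    using supporting_hyperplane_relative_frontier[OF cv yB] yni ri by metis
  have ay: "a \<bullet> y < 0" using a(3)[of 0] i0 ri by simp
  define f where "f = (1 / (a \<bullet> y)) *\<^sub>R a"
  have "f \<bullet> y = 1" unfolding f_def using ay by simp
  moreover have "f \<in> dual_unit_ball N"
    unfolding dual_unit_ball_def
  proof (intro CollectI allI impI)
    fix z assume "N z \<le> 1"
    then have "a \<bullet> y \<le> a \<bullet> z" using a(2) cl by (simp add: unit_ball_def)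
    then show "f \<bullet> z \<le> 1" unfolding f_def using ay by (simp add: field_simps)
  qed
  ultimately show ?thesis by blast
qed

lemma uniq_fun:
  fixes N :: "real^'n \<Rightarrow> real"
  assumes "polyhedral_norm N"
    and good: "\<And>S. S \<subseteq> ext_ball N \<Longrightarrow> span S \<noteq> UNIV \<Longrightarrow> y \<notin> span S"
    and f1: "f1 \<in> dual_unit_ball N" "f1 \<bullet> y = 1"
    and f2: "f2 \<in> dual_unit_ball N" "f2 \<bullet> y = 1"
    and yB: "N y \<le> 1"
  shows "f1 = f2"
proof (rule ccontr)
  assume ne: "f1 \<noteq> f2"
  have n: "is_norm N" and p: "polytope (unit_ball N)" using assms by (auto simp: polyhedral_norm_def)
  let ?B = "unit_ball N"
  define E1 where "E1 = ?B \<inter> {x. f1 \<bullet> x = 1}"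
  define E where "E = E1 \<inter> {x. f2 \<bullet> x = 1}"
  have cvB: "convex ?B" using polytope_imp_convex[OF p] .
  have le1: "\<And>x. x \<in> ?B \<Longrightarrow> f1 \<bullet> x \<le> 1" using f1(1) by (simp add: unit_ball_def dual_unit_ball_def)
  have le2: "\<And>x. x \<in> ?B \<Longrightarrow> f2 \<bullet> x \<le> 1" using f2(1) by (simp add: unit_ball_def dual_unit_ball_def)
  have F1: "E1 face_of ?B" unfolding E1_def by (rule face_of_Int_supporting_hyperplane_le[OF cvB le1])
  have cvE1: "convex E1" unfolding E1_def by (simp add: cvB convex_Int convex_hyperplane)
  have F2: "E face_of E1" unfolding E_def
    by (rule face_of_Int_supporting_hyperplane_le[OF cvE1]) (simp add: E1_def le2)
  have FE: "E face_of ?B" using face_of_trans[OF F2 F1] .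
  have cE: "compact E" using face_of_imp_compact[OF polytope_imp_convex[OF p] polytope_imp_compact[OF p] FE] .
  have cvE: "convex E" using face_of_imp_convex[OF FE] .
  define S where "S = {x. x extreme_point_of E}"
  have yE: "y \<in> E" using yB f1 f2 by (simp add: E_def E1_def unit_ball_def)
  have "E = convex hull S" unfolding S_def by (rule Krein_Milman_Minkowski[OF cE cvE])
  then have ySp: "y \<in> span S" using yE convex_hull_subset_span by blast
  have Sext: "S \<subseteq> ext_ball N" unfolding S_def ext_ball_def using extreme_point_of_face[OF FE] by blast
  have SE: "S \<subseteq> E" unfolding S_def using extreme_point_of_def by blast
  have "S \<subseteq> {x. (f1 - f2) \<bullet> x = 0}" using SE unfolding E_def E1_def by (force simp: inner_diff_left)
  then have "span S \<subseteq> {x. (f1 - f2) \<bullet> x = 0}" by (simp add: span_minimal subspace_hyperplane)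
  moreover have "(f1 - f2) \<bullet> (f1 - f2) \<noteq> 0" using ne by simp
  ultimately have "span S \<noteq> UNIV" by blast
  then show False using good[OF Sext] ySp by blast
qed

lemma fix_fun:
  fixes N :: "real^'n \<Rightarrow> real"
  assumes n: "is_norm N" and lin: "linear P" and c: "\<And>x. N x \<le> 1 \<Longrightarrow> N (P x) \<le> 1"
    and Py: "P y = y" and f: "f \<in> dual_unit_ball N" "f \<bullet> y = 1"
    and u: "\<And>h. h \<in> dual_unit_ball N \<Longrightarrow> h \<bullet> y = 1 \<Longrightarrow> h = f"
  shows "f \<bullet> P x = f \<bullet> x"
proof -
  define h where "h = adjoint P f"
  have hx: "h \<bullet> z = f \<bullet> P z" for z
    using adjoint_works[OF lin, of z f] unfolding h_def by (simp add: inner_commute)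
  have "h \<in> dual_unit_ball N" unfolding dual_unit_ball_def
  proof (intro CollectI allI impI)
    fix z assume "N z \<le> 1"
    then have "N (P z) \<le> 1" by (rule c)
    then have "f \<bullet> P z \<le> 1" using f(1) by (simp add: dual_unit_ball_def)
    then show "h \<bullet> z \<le> 1" using hx by simp
  qed
  moreover have "h \<bullet> y = 1" using hx Py f(2) by simp
  ultimately have "h = f" by (rule u)
  then show ?thesis using hx by metis
qed

lemma not_sub:
  fixes N :: "real^'n \<Rightarrow> real"
  assumes Y: "subspace Y" and d: "1 \<le> dim Y" and g: "subspace_gen_pos N Y"
    and S: "S \<subseteq> ext_ball N" "span S \<noteq> UNIV"
  shows "\<not> Y \<subseteq> span S"
proof
  assume sub: "Y \<subseteq> span S"
  have ig: "in_gen_pos Y (span S)" using g S(1) by (simp add: subspace_gen_pos_def)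
  have "span (Y \<union> span S) = span S" using sub by (metis span_span span_superset subset_antisym span_mono Un_upper2 Un_least)
  then have "dim (span S) = min (dim Y + dim (span S)) DIM(real^'n)" using ig by (simp add: in_gen_pos_def)
  moreover have "dim (span S) < DIM(real^'n)"
    using S(2) dim_eq_full[of S] dim_subset_UNIV[of S] by (simp add: dim_span)
  ultimately show False using d by linarith
qed

lemma subsingleton_finite: "(\<And>a b. a \<in> A \<Longrightarrow> b \<in> A \<Longrightarrow> a = b) \<Longrightarrow> finite A"
  by (metis finite.simps insertI1 subsetI singletonI finite_subset finite.emptyI finite_insert equals0I)

lemma line_meets:
  assumes T: "subspace T" and z: "z \<notin> T"
  shows "finite {t::real. z + t *\<^sub>R u \<in> T}"
proof (rule subsingleton_finite)
  fix a b assume a: "a \<in> {t::real. z + t *\<^sub>R u \<in> T}" and b: "b \<in> {t::real. z + t *\<^sub>R u \<in> T}"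
  show "a = b"
  proof (rule ccontr)
    assume ab: "a \<noteq> b"
    have "(z + a *\<^sub>R u) - (z + b *\<^sub>R u) \<in> T" using a b T subspace_diff by blast
    then have "(a - b) *\<^sub>R u \<in> T" by (simp add: algebra_simps)
    then have "(1 / (a - b)) *\<^sub>R ((a - b) *\<^sub>R u) \<in> T" using T subspace_mul by blast
    then have uT: "u \<in> T" using ab by simp
    have au: "a *\<^sub>R u \<in> T" by (rule subspace_mul[OF T uT])
    have "(z + a *\<^sub>R u) - a *\<^sub>R u \<in> T" using subspace_diff[OF T _ au] a by blast
    then show False using z by simp
  qed
qed

lemma avoid:
  fixes Y :: "'a::real_vector set"
  assumes "finite F" "subspace Y" "\<And>T. T \<in> F \<Longrightarrow> subspace T \<and> \<not> Y \<subseteq> T"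
  shows "\<exists>z\<in>Y. \<forall>T\<in>F. z \<notin> T"
  using assms(1,3)
proof (induction F rule: finite_induct)
  case empty then show ?case using assms(2) subspace_0 by blast
next
  case (insert T F)
  then obtain z where z: "z \<in> Y" "\<forall>T'\<in>F. z \<notin> T'" by blast
  show ?case
  proof (cases "z \<in> T")
    case False then show ?thesis using z by blast
  next
    case True
    obtain w where w: "w \<in> Y" "w \<notin> T" using insert.prems by blast
    have fin: "finite (insert 0 (\<Union>T'\<in>F. {t::real. z + t *\<^sub>R w \<in> T'}))"
    proof -
      have "\<forall>x\<in>F. finite {t::real. z + t *\<^sub>R w \<in> x}"
        using line_meets insert.prems z(2) by blast
      then show ?thesis using insert.hyps(1) by simp
    qed
    obtain c where c: "c \<notin> insert 0 (\<Union>T'\<in>F. {t::real. z + t *\<^sub>R w \<in> T'})"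
      using ex_new_if_finite[OF infinite_UNIV_char_0 fin] by blast
    have "z + c *\<^sub>R w \<notin> T"
    proof
      assume "z + c *\<^sub>R w \<in> T"
      moreover have sT: "subspace T" using insert.prems by blast
      ultimately have "(z + c *\<^sub>R w) - z \<in> T" using True subspace_diff by blast
      then have cw: "c *\<^sub>R w \<in> T" by simp
      have "(1 / c) *\<^sub>R (c *\<^sub>R w) \<in> T" by (rule subspace_mul[OF sT cw])
      then show False using c w by simp
    qed
    moreover have "z + c *\<^sub>R w \<in> Y" using z w assms(2) by (simp add: subspace_add subspace_mul)
    ultimately show ?thesis using c by blast
  qed
qed



lemma cont_mv: "continuous_on UNIV (\<lambda>A::real^'n^'m. A *v x)"
proof -
  have "linear (\<lambda>A::real^'n^'m. A *v x)"
    by (auto simp: linear_iff matrix_vector_mult_def vec_eq_iff sum.distrib sum_distrib_left algebra_simps)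
  then show ?thesis using linear_continuous_on linear_conv_bounded_linear by blast
qed

lemma proj_exists:
  fixes Y :: "(real^'n) set"
  assumes Y: "subspace Y" shows "\<exists>P. is_projection Y P"
proof -
  obtain BY where BY: "BY \<subseteq> Y" "independent BY" "Y \<subseteq> span BY" by (rule basis_exists[of Y]) blast
  obtain B where B: "BY \<subseteq> B" "independent B" "UNIV \<subseteq> span B"
    by (rule maximal_independent_subset_extend[of BY UNIV, OF _ BY(2)]) blast+
  obtain g where g: "linear g" "\<And>x. x \<in> B \<Longrightarrow> g x = (if x \<in> BY then x else 0)"
    using linear_independent_extend[OF B(2), of "\<lambda>x. if x \<in> BY then x else 0"] by blast
  have gB: "g ` B \<subseteq> Y"
  proof
    fix v assume "v \<in> g ` B"
    then obtain x where x: "x \<in> B" "v = g x" by blast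
    show "v \<in> Y" using g(2)[OF x(1)] x(2) BY(1) subspace_0[OF Y] by (cases "x \<in> BY") auto
  qed
  have "g x \<in> Y" for x
  proof -
    have "x \<in> span B" using B(3) by blast
    then have "g x \<in> g ` span B" by blast
    then have "g x \<in> span (g ` B)" using span_linear_image[OF g(1), of B] by simp
    moreover have "span (g ` B) \<subseteq> Y" using span_mono[OF gB] span_eq_iff[of Y] Y by blast
    ultimately show ?thesis by blast
  qed
  moreover have "g y = y" if "y \<in> Y" for y
  proof -
    have "y \<in> span BY" using that BY(3) by blast
    moreover have "\<And>x. x \<in> BY \<Longrightarrow> g x = id x" using g(2) B(1) by auto
    ultimately show ?thesis using linear_eq_on_span[OF g(1) linear_id, of BY y] by simp
  qed
  ultimately have "is_projection Y g" using g(1) unfolding is_projection_def by blast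
  then show ?thesis by blast
qed

lemma finite_ext:
  fixes N :: "real^'n \<Rightarrow> real"
  assumes "polyhedral_norm N" shows "finite (ext_ball N)"
proof -
  obtain v where v: "finite v" "unit_ball N = convex hull v"
    using assms by (auto simp: polyhedral_norm_def polytope_def)
  have "ext_ball N \<subseteq> v" unfolding ext_ball_def v(2) using extreme_point_of_convex_hull by blast
  then show ?thesis using v(1) finite_subset by blast
qed

lemma scale_bound:
  fixes N :: "real^'n \<Rightarrow> real"
  assumes n: "is_norm N" and lin: "linear L" and c: "\<And>x. N x \<le> 1 \<Longrightarrow> N (L x) \<le> c"
  shows "N (L v) \<le> c * N v"
proof (cases "v = 0")
  case True then show ?thesis using nrm0[OF n] linear_0[OF lin] by simp
next
  case False
  then have Np: "N v > 0" using nrm_pos[OF n] by blast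
  have "N ((1 / N v) *\<^sub>R v) = 1" using Np nrm_scale[OF n] by simp
  then have "N (L ((1 / N v) *\<^sub>R v)) \<le> c" using c by simp
  then have "N (L v) / N v \<le> c" using Np nrm_scale[OF n] linear_scale[OF lin] by (simp add: divide_inverse mult.commute)
  then show ?thesis using Np by (simp add: divide_le_eq mult.commute)
qed

lemma good_fun:
  fixes N :: "real^'n \<Rightarrow> real"
  assumes pn: "polyhedral_norm N" and Y: "subspace Y"
    and P: "is_projection Y P" "\<And>x. N x \<le> 1 \<Longrightarrow> N (P x) \<le> 1"
    and Q: "is_projection Y Q" "\<And>x. N x \<le> 1 \<Longrightarrow> N (Q x) \<le> 1"
    and p: "p \<in> Y" "\<And>S. S \<subseteq> ext_ball N \<Longrightarrow> span S \<noteq> UNIV \<Longrightarrow> p \<notin> span S"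
  shows "\<exists>f\<in>dual_unit_ball N. f \<bullet> p = N p \<and> (\<forall>x. f \<bullet> P x = f \<bullet> x) \<and> (\<forall>x. f \<bullet> Q x = f \<bullet> x)"
proof -
  have n: "is_norm N" using pn by (simp add: polyhedral_norm_def)
  have "span {} \<noteq> (UNIV :: (real^'n) set)"
  proof
    assume h: "span {} = (UNIV :: (real^'n) set)"
    have "(vec 1 :: real^'n) \<in> span {}" by (simp only: h UNIV_I)
    then have "(vec 1 :: real^'n) = 0" by simp
    then show False by (simp add: vec_eq_iff)
  qed
  then have p0: "p \<noteq> 0" using p(2)[of "{}"] span_zero by blast
  then have Np: "N p > 0" using nrm_pos[OF n] by blast
  define y where "y = (1 / N p) *\<^sub>R p"
  have Ny: "N y = 1" unfolding y_def using Np nrm_scale[OF n] by simp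
  have yY: "y \<in> Y" unfolding y_def using p(1) Y subspace_mul by blast
  have yg: "y \<notin> span S" if "S \<subseteq> ext_ball N" "span S \<noteq> UNIV" for S
  proof
    assume "y \<in> span S"
    then have "N p *\<^sub>R y \<in> span S" by (rule span_mul)
    then have "p \<in> span S" unfolding y_def using Np by simp
    then show False using p(2) that by blast
  qed
  obtain f where f: "f \<in> dual_unit_ball N" "f \<bullet> y = 1" using supporting_fun[OF pn Ny] by blast
  have u: "h = f" if "h \<in> dual_unit_ball N" "h \<bullet> y = 1" for h
    using uniq_fun[OF pn yg that f] Ny by simp
  have linP: "linear P" and Py: "P y = y" using P(1) yY by (auto simp: is_projection_def)
  have linQ: "linear Q" and Qy: "Q y = y" using Q(1) yY by (auto simp: is_projection_def)
  have "\<forall>x. f \<bullet> P x = f \<bullet> x" using fix_fun[OF n linP P(2) Py f u] by blast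
  moreover have "\<forall>x. f \<bullet> Q x = f \<bullet> x" using fix_fun[OF n linQ Q(2) Qy f u] by blast
  moreover have "f \<bullet> p = N p"
  proof -
    have "p = N p *\<^sub>R y" unfolding y_def using Np by simp
    then have "f \<bullet> p = N p * (f \<bullet> y)" by (metis inner_scaleR_right)
    then show ?thesis using f(2) by simp
  qed
  ultimately show ?thesis using f(1) by blast
qed

lemma uniq_main:
  fixes N :: "real^'n \<Rightarrow> real"
  assumes pn: "polyhedral_norm N" and Y: "subspace Y" and d: "1 \<le> dim Y"
    and g: "subspace_gen_pos N Y"
    and P: "is_projection Y P" "\<And>x. N x \<le> 1 \<Longrightarrow> N (P x) \<le> 1"
    and Q: "is_projection Y Q" "\<And>x. N x \<le> 1 \<Longrightarrow> N (Q x) \<le> 1"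
  shows "P = Q"
proof
  fix x
  have n: "is_norm N" using pn by (simp add: polyhedral_norm_def)
  define fam where "fam = {S. S \<subseteq> ext_ball N \<and> span S \<noteq> UNIV}"
  have "fam \<subseteq> Pow (ext_ball N)" unfolding fam_def by blast
  then have ffam: "finite fam" using finite_ext[OF pn] finite_subset by blast
  have "\<exists>z\<in>Y. \<forall>T\<in>span ` fam. z \<notin> T"
    by (rule avoid) (use ffam Y not_sub[OF Y d g] in \<open>auto simp: fam_def\<close>)
  then obtain z where z: "z \<in> Y" "\<And>S. S \<in> fam \<Longrightarrow> z \<notin> span S" by blast
  define u where "u = P x - Q x"
  have uY: "u \<in> Y" unfolding u_def using P(1) Q(1) Y subspace_diff by (metis is_projection_def)
  show "P x = Q x"
  proof (rule ccontr)
    assume "P x \<noteq> Q x"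
    then have u0: "u \<noteq> 0" unfolding u_def by simp
    then have Nu: "N u > 0" using nrm_pos[OF n] by blast
    define bad where "bad = (\<Union>S\<in>fam. {t::real. z + t *\<^sub>R u \<in> span S})"
    have fbad: "finite bad" unfolding bad_def using ffam line_meets[OF subspace_span z(2)] by blast
    define M where "M = 2 * N z / N u"
    have M0: "M \<ge> 0" unfolding M_def using nrm_nonneg[OF n, of z] Nu by simp
    define t where "t = Max (insert M bad) + 1"
    have "M \<le> Max (insert M bad)" using fbad by simp
    then have tM: "t > M" unfolding t_def by simp
    have tb: "t \<notin> bad"
    proof
      assume "t \<in> bad"
      then have "t \<le> Max (insert M bad)" using fbad by simp
      then show False unfolding t_def by simp
    qed
    define p where "p = z + t *\<^sub>R u"
    have pY: "p \<in> Y" unfolding p_def using z(1) uY Y by (simp add: subspace_add subspace_mul)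
    have pg: "p \<notin> span S" if "S \<subseteq> ext_ball N" "span S \<noteq> UNIV" for S
      using tb that unfolding bad_def p_def fam_def by blast
    obtain f where f: "f \<in> dual_unit_ball N" "f \<bullet> p = N p" "\<forall>x. f \<bullet> P x = f \<bullet> x" "\<forall>x. f \<bullet> Q x = f \<bullet> x"
      using good_fun[OF pn Y P Q pY pg] by blast
    have fu: "f \<bullet> u = 0" unfolding u_def using f(3,4) by (simp add: inner_diff_right)
    have "N p = f \<bullet> z" using f(2) fu unfolding p_def by (simp add: inner_add_right)
    also have "\<dots> \<le> N z" by (rule dual_le[OF n f(1)])
    finally have A: "N p \<le> N z" .
    have "N (t *\<^sub>R u) - N (- z) \<le> N (t *\<^sub>R u - (- z))" by (rule nrm_diff[OF n])
    then have "t * N u - N z \<le> N p" unfolding p_def using nrm_scale[OF n] nrm_neg[OF n] tM M0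
      by (simp add: algebra_simps)
    moreover have "t * N u > 2 * N z" using tM Nu unfolding M_def by (simp add: divide_less_eq)
    ultimately show False using A by linarith
  qed
qed

lemma closed_pre: "closed S \<Longrightarrow> continuous_on UNIV f \<Longrightarrow> closed (f -` S)"
  using continuous_on_closed_vimage[of UNIV f] by simp

lemma cont_N:
  fixes N :: "real^'n \<Rightarrow> real"
  assumes n: "is_norm N" shows "continuous_on UNIV N"
proof -
  obtain C where C: "C > 0" "\<And>x. N x \<le> C * norm x" using nrm_upper[OF n] by blast
  show ?thesis unfolding continuous_on_iff
  proof (intro ballI allI impI)
    fix x :: "real^'n" and e :: real assume e: "e > 0"
    show "\<exists>d>0. \<forall>x'\<in>UNIV. dist x' x < d \<longrightarrow> dist (N x') (N x) < e"
    proof (intro exI[of _ "e / C"] conjI ballI impI)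
      show "e / C > 0" using e C by simp
      fix x' assume "dist x' x < e / C"
      then have "C * norm (x' - x) < e" using C(1) by (simp add: dist_norm field_simps)
      moreover have "N x' - N x \<le> N (x' - x)" by (rule nrm_diff[OF n])
      moreover have "N x - N x' \<le> N (x - x')" by (rule nrm_diff[OF n])
      moreover have "N (x - x') = N (x' - x)" using nrm_neg[OF n, of "x' - x"] by simp
      moreover have "N (x' - x) \<le> C * norm (x' - x)" by (rule C(2))
      ultimately show "dist (N x') (N x) < e" by (simp add: dist_real_def abs_less_iff)
    qed
  qed
qed

lemma exist_main:
  fixes N :: "real^'n \<Rightarrow> real"
  assumes pn: "polyhedral_norm N" and Y: "subspace Y" and d: "1 \<le> dim Y"
    and pc: "proj_const N Y = 1"
  shows "\<exists>P. is_projection Y P \<and> op_norm N P = 1"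
proof -
  have n: "is_norm N" using pn by (simp add: polyhedral_norm_def)
  have "\<not> Y \<subseteq> {0}" using d dim_eq_0[of Y] by linarith
  then obtain y0 where y0: "y0 \<in> Y" "y0 \<noteq> 0" by blast
  define X where "X = {op_norm N P | P. is_projection Y P}"
  have Xne: "X \<noteq> {}" unfolding X_def using proj_exists[OF Y] by blast
  have Xbdd: "bdd_below X" unfolding X_def bdd_below_def
    using proj_op_norm_ge[OF pn _ y0] by blast
  have step: "\<exists>P. is_projection Y P \<and> (\<forall>x. N x \<le> 1 \<longrightarrow> N (P x) \<le> 1 + 1 / real (Suc m))" for m
  proof -
    have "Inf X < 1 + 1 / real (Suc m)" using pc unfolding proj_const_def X_def by simp
    then obtain v where "v \<in> X" "v < 1 + 1 / real (Suc m)" using cInf_less_iff[OF Xne Xbdd] by blast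
    then obtain P where P: "is_projection Y P" "op_norm N P < 1 + 1 / real (Suc m)" unfolding X_def by blast
    have "linear P" using P(1) by (simp add: is_projection_def)
    then have "\<forall>x. N x \<le> 1 \<longrightarrow> N (P x) \<le> 1 + 1 / real (Suc m)"
      using op_norm_le_iff[OF pn, of P "1 + 1 / real (Suc m)"] P(2) by simp
    then show ?thesis using P(1) by blast
  qed
  define K where "K m = {A :: real^'n^'n. (\<forall>x. A *v x \<in> Y) \<and> (\<forall>y\<in>Y. A *v y = y)
      \<and> (\<forall>x. N x \<le> 1 \<longrightarrow> N (A *v x) \<le> 1 + 1 / real (Suc m))}" for m
  have Kne: "K m \<noteq> {}" for m
  proof -
    obtain P where P: "is_projection Y P" "\<forall>x. N x \<le> 1 \<longrightarrow> N (P x) \<le> 1 + 1 / real (Suc m)"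
      using step by blast
    have "linear P" using P(1) by (simp add: is_projection_def)
    then have mP: "matrix P *v x = P x" for x using matrix_vector_mul(2)[of P] by metis
    have "matrix P \<in> K m" unfolding K_def using P by (simp add: mP is_projection_def)
    then show ?thesis by blast
  qed
  have Kmono: "K m \<subseteq> K k" if "k \<le> m" for k m
  proof -
    have "1 / real (Suc m) \<le> 1 / real (Suc k)" using that by (simp add: frac_le)
    then show ?thesis unfolding K_def by force
  qed
  have Kcl: "closed (K m)" for m
  proof -
    have Keq: "K m = (\<Inter>x. (\<lambda>A. A *v x) -` Y) \<inter> (\<Inter>y\<in>Y. (\<lambda>A. A *v y) -` {y})
       \<inter> (\<Inter>x\<in>{x. N x \<le> 1}. (\<lambda>A. A *v x) -` {v. N v \<le> 1 + 1 / real (Suc m)})"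
      unfolding K_def by auto
    moreover have "closed {v. N v \<le> c}" for c
      using closed_Collect_le[OF cont_N[OF n] continuous_on_const] .
    then have c3: "closed ((\<lambda>A::real^'n^'n. A *v x) -` {v. N v \<le> c})" for x c
      by (rule closed_pre[OF _ cont_mv])
    have c1: "closed ((\<lambda>A::real^'n^'n. A *v x) -` Y)" for x
      by (rule closed_pre[OF closed_subspace[OF Y] cont_mv])
    have c2: "closed ((\<lambda>A::real^'n^'n. A *v x) -` {y})" for x y
      by (rule closed_pre[OF closed_singleton cont_mv])
    show ?thesis unfolding Keq by (intro closed_Int closed_INT ballI c1 c2 c3)
  qed
  have Kbd: "bounded (K 0)"
  proof -
    obtain R where R: "R > 0" "\<And>x. norm x \<le> R * N x" using nrm_lower[OF pn] by blast
    define D where "D = 2 * R * (\<Sum>j\<in>UNIV. N (axis j (1::real) :: real^'n))"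
    define Dm :: "real^'n^'n" where "Dm = (\<chi> i j. D)"
    have "norm A \<le> norm Dm" if A: "A \<in> K 0" for A
    proof -
      have lin: "linear ((*v) A)" by simp
      have c2: "\<And>x. N x \<le> 1 \<Longrightarrow> N (A *v x) \<le> 2" using A unfolding K_def by auto
      have ent: "\<bar>A $ i $ j\<bar> \<le> D" for i j
      proof -
        have "A $ i $ j = (A *v axis j 1) $ i" by (simp add: matrix_vector_mult_basis column_def)
        then have "\<bar>A $ i $ j\<bar> \<le> norm (A *v axis j 1)" using component_le_norm_cart by metis
        also have "\<dots> \<le> R * N (A *v axis j 1)" by (rule R(2))
        also have "\<dots> \<le> R * (2 * N (axis j 1))"
          using scale_bound[OF n lin c2] R(1) by (simp add: mult_left_mono)
        also have "\<dots> \<le> R * (2 * (\<Sum>j\<in>UNIV. N (axis j (1::real) :: real^'n)))"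
          using R(1) nrm_nonneg[OF n] by (intro mult_left_mono member_le_sum) (auto intro: sum_nonneg)
        finally show ?thesis unfolding D_def by (simp add: algebra_simps)
      qed
      show ?thesis
      proof (rule norm_le_componentwise_cart)
        fix i show "norm (A $ i) \<le> norm (Dm $ i)"
        proof (rule norm_le_componentwise_cart)
          fix j show "norm (A $ i $ j) \<le> norm (Dm $ i $ j)" using ent[of i j] unfolding Dm_def by simp
        qed
      qed
    qed
    then show ?thesis unfolding bounded_iff by blast
  qed
  have Kc: "compact (K 0)" using Kbd Kcl compact_eq_bounded_closed by blast
  have "K 0 \<inter> \<Inter>(range K) \<noteq> {}"
  proof (rule compact_imp_fip[OF Kc])
    show "\<And>T. T \<in> range K \<Longrightarrow> closed T" using Kcl by blast
    fix F' assume F': "finite F'" "F' \<subseteq> range K"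
    then obtain I where I: "finite I" "F' = K ` I" using finite_subset_image by metis
    define m where "m = Max (insert 0 I)"
    have "K m \<subseteq> K 0 \<inter> \<Inter>F'"
    proof -
      have "K m \<subseteq> K i" if "i \<in> I" for i using Kmono that I(1) unfolding m_def by simp
      then show ?thesis using Kmono[of 0 m] I(2) by auto
    qed
    then show "K 0 \<inter> \<Inter>F' \<noteq> {}" using Kne[of m] by blast
  qed
  then obtain A where A: "\<And>m. A \<in> K m" by blast
  define P where "P = (\<lambda>x. A *v x)"
  have linP: "linear P" unfolding P_def by simp
  have prj: "is_projection Y P" using A[of 0] linP unfolding K_def P_def is_projection_def by blast
  have "N (P x) \<le> 1" if "N x \<le> 1" for x
  proof (rule ccontr)
    assume "\<not> N (P x) \<le> 1"
    then have "N (P x) - 1 > 0" by simp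
    then obtain m where m: "inverse (real (Suc m)) < N (P x) - 1" using reals_Archimedean by blast
    have "N (P x) \<le> 1 + 1 / real (Suc m)" using A[of m] that unfolding K_def P_def by blast
    then show False using m by (simp add: inverse_eq_divide)
  qed
  then have "op_norm N P \<le> 1" using op_norm_le_iff[OF pn linP] by blast
  moreover have "1 \<le> op_norm N P" by (rule proj_op_norm_ge[OF pn prj y0])
  ultimately show ?thesis using prj by force
qed


theorem mainTheorem7:
  fixes N :: "real^'n \<Rightarrow> real" and Y :: "(real^'n) set"
  assumes "polyhedral_norm N"
    and "subspace Y"
    and "1 \<le> dim Y" and "dim Y \<le> CARD('n) - 1"
    and "subspace_gen_pos N Y"
    and "proj_const N Y = 1"
  shows "\<exists>!P. is_projection Y P \<and> op_norm N P = 1"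
proof (rule ex_ex1I)
  show "\<exists>P. is_projection Y P \<and> op_norm N P = 1"
    by (rule exist_main[OF assms(1,2,3,6)])
next
  fix P Q assume P: "is_projection Y P \<and> op_norm N P = 1" and Q: "is_projection Y Q \<and> op_norm N Q = 1"
  have lP: "linear P" and lQ: "linear Q" using P Q by (auto simp: is_projection_def)
  have cP: "\<And>x. N x \<le> 1 \<Longrightarrow> N (P x) \<le> 1" using op_norm_le_iff[OF assms(1) lP, of 1] P by simp
  have cQ: "\<And>x. N x \<le> 1 \<Longrightarrow> N (Q x) \<le> 1" using op_norm_le_iff[OF assms(1) lQ, of 1] Q by simp
  show "P = Q" using uniq_main[OF assms(1,2,3,5)] P Q cP cQ by blast
qed

end
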